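(* Let $K_n$ be the complete directed graph on $[n]$ with edges $(i,j)$ for all $i<j$. A subgraph $H\subseteq K_n$ gives a face $Q_H$ of $\tilde Q_{K_n}$ if and only if there are integers $0=n_0<n_1<\dots<n_\ell<n_{\ell+1}=n$ ($\ell\ge0$) and, for each $k=0,\dots,\ell$, disjoint subsets $L_k,R_k\subseteq[n_k+1,n_{k+1}]$ such that $H=\bigsqcup_{k=0}^{\ell}(K_{[n_k+1,n_{k+1}]})_{L_k,R_k}$, i.e. $E(H)=\{(i,j):i<j,\ i\in L_k,\ j\in R_k\text{ for some }k\}$.
   Context: $[a,b]=\{a,\dots,b\}$; $K_P$ is the complete graph on $P$ with edges oriented from smaller to larger vertex. For a graph $G$ and disjoint vertex sets $L,R$, $G_{L,R}$ is the subgraph with edges $\{(i,j)\in E(G):i\in L,j\in R\}$. Subgraphs $H\subseteq K_n$ have vertex set $[n]$. $Q_H=\mathrm{conv}\{\mathbf e_i-\mathbf e_j:(i,j)\in E(H)\}$ and $\tilde Q_{K_n}=\mathrm{conv}(\{\mathbf 0\}\cup\{\mathbf e_i-\mathbf e_j:1\le i<j\le n\})$ in $\mathbb R^n$. *)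

theory Defs
  imports "HOL-Analysis.Analysis"
begin

text \<open>R^n is modelled as real^'n with n = CARD('n); the coordinates are labelled
  by [n] = {1..n} through a fixed bijection idx :: nat => 'n (assumed in the theorem).\<close>

definition unitv :: "(nat \<Rightarrow> 'n::finite) \<Rightarrow> nat \<Rightarrow> real^'n" where
  "unitv idx i = axis (idx i) 1"

definition Kedges :: "nat \<Rightarrow> (nat \<times> nat) set" where
  "Kedges n = {(i, j). 1 \<le> i \<and> i < j \<and> j \<le> n}"

definition QH :: "(nat \<Rightarrow> 'n::finite) \<Rightarrow> (nat \<times> nat) set \<Rightarrow> (real^'n) set" where
  "QH idx E = convex hull {unitv idx i - unitv idx j | i j. (i, j) \<in> E}"

definition Qtilde :: "(nat \<Rightarrow> 'n::finite) \<Rightarrow> nat \<Rightarrow> (real^'n) set" where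
  "Qtilde idx n = convex hull (insert 0 {unitv idx i - unitv idx j | i j. (i, j) \<in> Kedges n})"

end

theory Submission
  imports Defs
begin

lemma block_lemma:
  assumes EK: "E \<subseteq> Kedges n"
    and nopath: "\<And>x y z. (x,y)\<in>E \<Longrightarrow> (y,z)\<in>E \<Longrightarrow> False"
    and cross: "\<And>x y u v. (x,y)\<in>E \<Longrightarrow> (u,v)\<in>E \<Longrightarrow> x<v \<Longrightarrow> u<y \<Longrightarrow> (x,v)\<in>E"
    and ij: "i < j" and e1: "(i,j')\<in>E" and e2: "(i',j)\<in>E"
    and cov: "\<And>m. i \<le> m \<Longrightarrow> m < j \<Longrightarrow> \<exists>x y. (x,y)\<in>E \<and> x \<le> m \<and> m < y"
  shows "(i,j)\<in>E"
proof (cases "j < j'")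
  case True
  have "i' < j" using e2 EK by (auto simp: Kedges_def)
  then show ?thesis using cross[OF e1 e2] ij True by auto
next
  case False
  define Y where "Y = {y. (i,y)\<in>E \<and> y \<le> j}"
  have fY: "finite Y" unfolding Y_def by (rule finite_subset[of _ "{..j}"]) auto
  have "j' \<in> Y" using False e1 by (auto simp: Y_def)
  hence ne: "Y \<noteq> {}" by auto
  define y where "y = Max Y"
  have yY: "y \<in> Y" using fY ne y_def Max_in by auto
  have ymax: "\<And>z. z \<in> Y \<Longrightarrow> z \<le> y" using fY y_def by auto
  have iy: "(i,y)\<in>E" "y \<le> j" using yY by (auto simp: Y_def)
  have "i < y" using iy EK by (auto simp: Kedges_def)
  show ?thesis
  proof (cases "y = j")
    case True thus ?thesis using iy by simp
  next
    case False
    hence "y < j" using iy by simp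
    then obtain u v where uv: "(u,v)\<in>E" "u \<le> y" "y < v" using cov[of y] \<open>i<y\<close> by auto
    have "u \<noteq> y" using nopath iy(1) uv(1) by blast
    hence "u < y" using uv by simp
    have iv: "(i,v)\<in>E" using cross[OF iy(1) uv(1)] \<open>i<y\<close> uv \<open>u<y\<close> by auto
    show ?thesis
    proof (cases "v \<le> j")
      case True
      hence "v \<in> Y" using iv by (auto simp: Y_def)
      thus ?thesis using ymax uv by force
    next
      case False
      have "i' < j" using e2 EK by (auto simp: Kedges_def)
      then show ?thesis using cross[OF iv e2] ij False by auto
    qed
  qed
qed

lemma comb_A:
  assumes n1: "n \<ge> 1" and EK: "E \<subseteq> Kedges n"
    and nopath: "\<And>x y z. (x,y)\<in>E \<Longrightarrow> (y,z)\<in>E \<Longrightarrow> False"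
    and cross: "\<And>x y u v. (x,y)\<in>E \<Longrightarrow> (u,v)\<in>E \<Longrightarrow> x<v \<Longrightarrow> u<y \<Longrightarrow> (x,v)\<in>E"
  shows "\<exists>(l::nat) (ns::nat \<Rightarrow> nat) (L::nat \<Rightarrow> nat set) (R::nat \<Rightarrow> nat set).
       ns 0 = 0 \<and> ns (Suc l) = n \<and> (\<forall>k\<le>l. ns k < ns (Suc k)) \<and>
       (\<forall>k\<le>l. L k \<subseteq> {ns k + 1..ns (Suc k)} \<and> R k \<subseteq> {ns k + 1..ns (Suc k)} \<and> L k \<inter> R k = {}) \<and>
       E = {(i, j). i < j \<and> (\<exists>k\<le>l. i \<in> L k \<and> j \<in> R k)}"
proof -
  define cov where "cov m \<longleftrightarrow> (\<exists>x y. (x,y)\<in>E \<and> x \<le> m \<and> m < y)" for m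
  define S where "S = {0, n} \<union> {m \<in> {1..<n}. \<not> cov m}"
  have fS: "finite S" unfolding S_def by auto
  have Sn: "S \<subseteq> {0..n}" unfolding S_def by auto
  define xs where "xs = sorted_list_of_set S"
  have setxs: "set xs = S" using fS by (simp add: xs_def)
  have lenxs: "length xs = card S" by (simp add: xs_def)
  have srt: "sorted_wrt (<) xs" unfolding xs_def by simp
  have "card {0,n} \<le> card S" using fS by (intro card_mono) (auto simp: S_def)
  hence len2: "length xs \<ge> 2" using n1 lenxs by auto
  define l where "l = length xs - 2"
  define ns where "ns k = xs ! k" for k
  have lenl: "length xs = Suc (Suc l)" using len2 l_def by simp
  have mono: "ns k < ns k'" if "k < k'" "k' < length xs" for k k'
    using sorted_wrt_nth_less[OF srt that] by (simp add: ns_def)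
  have monole: "ns k \<le> ns k'" if "k \<le> k'" "k' < length xs" for k k'
    using mono[of k k'] that by (cases "k = k'") auto
  have nsS: "ns k \<in> S" if "k < length xs" for k
    using that setxs by (auto simp: ns_def)
  have inS: "\<exists>t<length xs. ns t = m" if "m \<in> S" for m
    using that setxs by (auto simp: ns_def in_set_conv_nth)
  have ns0: "ns 0 = 0"
  proof -
    obtain t where t: "t < length xs" "ns t = 0" using inS[of 0] by (auto simp: S_def)
    show ?thesis using monole[of 0 t] t by simp
  qed
  have nsl: "ns (Suc l) = n"
  proof -
    obtain t where t: "t < length xs" "ns t = n" using inS[of n] by (auto simp: S_def)
    have "t \<le> Suc l" using t lenl by simp
    hence "n \<le> ns (Suc l)" using monole[of t "Suc l"] t lenl by simp
    moreover have "ns (Suc l) \<le> n" using nsS[of "Suc l"] lenl Sn by auto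
    ultimately show ?thesis by simp
  qed
  define blk where "blk k = {ns k + 1..ns (Suc k)}" for k
  define L where "L k = {i \<in> blk k. \<exists>y. (i,y)\<in>E}" for k
  define R where "R k = {j \<in> blk k. \<exists>x. (x,j)\<in>E}" for k
  have step: "\<forall>k\<le>l. ns k < ns (Suc k)" using mono lenl by auto
  have LR: "\<forall>k\<le>l. L k \<subseteq> {ns k + 1..ns (Suc k)} \<and> R k \<subseteq> {ns k + 1..ns (Suc k)} \<and> L k \<inter> R k = {}"
    using nopath by (auto simp: L_def R_def blk_def)
  have Eeq: "E = {(i, j). i < j \<and> (\<exists>k\<le>l. i \<in> L k \<and> j \<in> R k)}"
  proof (intro equalityI subsetI)
    fix p assume pE: "p \<in> E"
    obtain i j where p: "p = (i,j)" by (cases p)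
    have ij: "1 \<le> i" "i < j" "j \<le> n" using pE p EK by (auto simp: Kedges_def)
    have ex: "\<exists>k. i \<le> ns (Suc k)" using nsl ij by (intro exI[of _ l]) simp
    define k where "k = (LEAST k. i \<le> ns (Suc k))"
    have k1: "i \<le> ns (Suc k)" unfolding k_def by (rule LeastI_ex[OF ex])
    have kl: "k \<le> l"
    proof -
      have "k \<le> l" unfolding k_def by (rule Least_le) (use nsl ij in auto)
      thus ?thesis .
    qed
    have k2: "ns k < i"
    proof (cases k)
      case 0 thus ?thesis using ns0 ij by simp
    next
      case (Suc k')
      have "\<not> i \<le> ns (Suc k')" using not_less_Least[of k' "\<lambda>k. i \<le> ns (Suc k)"] Suc k_def by simp
      thus ?thesis using Suc by simp
    qed
    have jk: "j \<le> ns (Suc k)"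
    proof (rule ccontr)
      assume "\<not> j \<le> ns (Suc k)"
      hence lt: "ns (Suc k) < j" by simp
      have "ns (Suc k) \<in> S" using nsS[of "Suc k"] kl lenl by simp
      moreover have "ns (Suc k) \<noteq> 0" "ns (Suc k) \<noteq> n" using k1 ij lt by auto
      moreover have "cov (ns (Suc k))" unfolding cov_def using pE p k1 lt by auto
      ultimately show False using Sn unfolding S_def by auto
    qed
    show "p \<in> {(i, j). i < j \<and> (\<exists>k\<le>l. i \<in> L k \<and> j \<in> R k)}"
      using p pE ij k1 k2 jk kl by (auto simp: L_def R_def blk_def)
  next
    fix p assume "p \<in> {(i, j). i < j \<and> (\<exists>k\<le>l. i \<in> L k \<and> j \<in> R k)}"
    then obtain i j k where p: "p = (i,j)" and ij: "i < j" and kl: "k \<le> l"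
      and iL: "i \<in> L k" and jR: "j \<in> R k" by auto
    obtain j' where e1: "(i,j')\<in>E" using iL by (auto simp: L_def)
    obtain i' where e2: "(i',j)\<in>E" using jR by (auto simp: R_def)
    have bi: "ns k < i" and bj: "j \<le> ns (Suc k)" using iL jR by (auto simp: L_def R_def blk_def)
    have "(i,j)\<in>E"
    proof (rule block_lemma[OF EK nopath cross ij e1 e2])
      fix m assume m: "i \<le> m" "m < j"
      have "m \<notin> S"
      proof
        assume "m \<in> S"
        then obtain t where t: "t < length xs" "ns t = m" using inS by blast
        show False
        proof (cases "t \<le> k")
          case True thus False using monole[of t k] t kl lenl bi m by simp
        next
          case False thus False using monole[of "Suc k" t] t kl lenl bj m by simp
        qed
      qed
      moreover have "1 \<le> m" "m < n" using m bi bj nsl monole[of "Suc k" "Suc l"] kl lenl by auto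
      ultimately show "\<exists>x y. (x,y)\<in>E \<and> x \<le> m \<and> m < y" unfolding S_def cov_def by auto
    qed
    thus "p \<in> E" using p by simp
  qed
  show ?thesis using ns0 nsl step LR Eeq by blast
qed

lemma comb_B:
  assumes ns0: "ns 0 = 0" and nsl: "ns (Suc l) = n" and step: "\<forall>k\<le>l. ns k < ns (Suc k)"
    and LR: "\<forall>k\<le>l. L k \<subseteq> {ns k + 1..ns (Suc k)} \<and> R k \<subseteq> {ns k + 1..ns (Suc k)} \<and> L k \<inter> R k = {}"
    and Eeq: "E = {(i, j). i < j \<and> (\<exists>k\<le>l. i \<in> L k \<and> j \<in> R k)}"
  shows "\<exists>a::nat\<Rightarrow>real. (\<forall>(i,j)\<in>Kedges n. a i - a j \<le> 1) \<and> (\<forall>(i,j)\<in>Kedges n. (i,j)\<in>E \<longleftrightarrow> a i - a j = 1)"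
proof -
  have mono: "ns k < ns k'" if "k < k'" "k' \<le> Suc l" for k k'
    using that
  proof (induction k')
    case 0 thus ?case by simp
  next
    case (Suc k')
    show ?case
    proof (cases "k = k'")
      case True thus ?thesis using step Suc.prems by auto
    next
      case False
      hence "ns k < ns k'" using Suc by auto
      also have "ns k' < ns (Suc k')" using step Suc.prems by auto
      finally show ?thesis .
    qed
  qed
  have monole: "ns k \<le> ns k'" if "k \<le> k'" "k' \<le> Suc l" for k k'
    using mono[of k k'] that by (cases "k = k'") auto
  define blk where "blk i = (LEAST k. i \<le> ns (Suc k))" for i
  have blk: "blk i \<le> l \<and> ns (blk i) < i \<and> i \<le> ns (Suc (blk i))" if "1 \<le> i" "i \<le> n" for i
  proof -
    have ex: "\<exists>k. i \<le> ns (Suc k)" using nsl that by (intro exI[of _ l]) simp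
    have k1: "i \<le> ns (Suc (blk i))" unfolding blk_def by (rule LeastI_ex[OF ex])
    have kl: "blk i \<le> l" unfolding blk_def by (rule Least_le) (use nsl that in auto)
    have k2: "ns (blk i) < i"
    proof (cases "blk i")
      case 0 thus ?thesis using ns0 that by simp
    next
      case (Suc k')
      have "\<not> i \<le> ns (Suc k')" using not_less_Least[of k' "\<lambda>k. i \<le> ns (Suc k)"] Suc blk_def by simp
      thus ?thesis using Suc by simp
    qed
    show ?thesis using k1 k2 kl by simp
  qed
  have uniq: "k = k'" if "k \<le> l" "ns k < i" "i \<le> ns (Suc k)" "k' \<le> l" "ns k' < i" "i \<le> ns (Suc k')" for i k k'
  proof (rule ccontr)
    assume "k \<noteq> k'"
    hence "k < k' \<or> k' < k" by auto
    thus False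
    proof
      assume "k < k'" thus False using monole[of "Suc k" k'] that by simp
    next
      assume "k' < k" thus False using monole[of "Suc k'" k] that by simp
    qed
  qed
  have blkL: "blk i = k" if "k \<le> l" "i \<in> L k" for i k
  proof -
    have s1: "L k \<subseteq> {ns k + 1..ns (Suc k)}" "R k \<subseteq> {ns k + 1..ns (Suc k)}" using LR that(1) by blast+
    have b: "ns k < i" "i \<le> ns (Suc k)" using that(2) s1 by auto
    have "1 \<le> i" using b by simp
    moreover have "i \<le> n" using b monole[of "Suc k" "Suc l"] that nsl by simp
    ultimately show ?thesis using blk[of i] uniq[of "blk i" i k] b that by auto
  qed
  have blkR: "blk i = k" if "k \<le> l" "i \<in> R k" for i k
  proof -
    have s1: "L k \<subseteq> {ns k + 1..ns (Suc k)}" "R k \<subseteq> {ns k + 1..ns (Suc k)}" using LR that(1) by blast+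
    have b: "ns k < i" "i \<le> ns (Suc k)" using that(2) s1 by auto
    have "1 \<le> i" using b by simp
    moreover have "i \<le> n" using b monole[of "Suc k" "Suc l"] that nsl by simp
    ultimately show ?thesis using blk[of i] uniq[of "blk i" i k] b that by auto
  qed
  define a where "a i = 2 * real (blk i) + (if i \<in> L (blk i) then 1 else if i \<in> R (blk i) then 0 else 1/2)" for i
  have main: "a i - a j \<le> 1 \<and> ((i,j)\<in>E \<longleftrightarrow> a i - a j = 1)" if "(i,j) \<in> Kedges n" for i j
  proof -
    have ij: "1 \<le> i" "i < j" "j \<le> n" using that by (auto simp: Kedges_def)
    have bi: "blk i \<le> l" "ns (blk i) < i" "i \<le> ns (Suc (blk i))" using blk[of i] ij by auto
    have bj: "blk j \<le> l" "ns (blk j) < j" "j \<le> ns (Suc (blk j))" using blk[of j] ij by auto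
    have le: "blk i \<le> blk j"
    proof (rule ccontr)
      assume "\<not> blk i \<le> blk j"
      hence "ns (Suc (blk j)) \<le> ns (blk i)" using monole[of "Suc (blk j)" "blk i"] bi by simp
      thus False using bi bj ij by simp
    qed
    have Eiff: "(i,j)\<in>E \<longleftrightarrow> blk i = blk j \<and> i \<in> L (blk i) \<and> j \<in> R (blk j)"
    proof
      assume "(i,j)\<in>E"
      then obtain k where "k \<le> l" "i \<in> L k" "j \<in> R k" using Eeq by auto
      thus "blk i = blk j \<and> i \<in> L (blk i) \<and> j \<in> R (blk j)" using blkL blkR by auto
    next
      assume "blk i = blk j \<and> i \<in> L (blk i) \<and> j \<in> R (blk j)"
      thus "(i,j)\<in>E" using Eeq ij bi by auto
    qed
    have dL: "i \<in> L (blk i) \<Longrightarrow> i \<notin> R (blk i)" "j \<in> L (blk j) \<Longrightarrow> j \<notin> R (blk j)"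
      using LR bi bj by auto
    show ?thesis
    proof (cases "blk i = blk j")
      case True
      then show ?thesis using Eiff dL unfolding a_def by (auto split: if_splits)
    next
      case False
      hence "real (blk i) + 1 \<le> real (blk j)" using le by simp
      hence "a i - a j \<le> -1" unfolding a_def by (auto split: if_splits)
      thus ?thesis using Eiff False by auto
    qed
  qed
  show ?thesis using main by (intro exI[of _ a]) auto
qed

lemma from_a:
  fixes a :: "nat \<Rightarrow> real"
  assumes le: "\<forall>(i,j)\<in>Kedges n. a i - a j \<le> 1" and eq: "\<forall>(i,j)\<in>Kedges n. (i,j)\<in>E \<longleftrightarrow> a i - a j = 1"
    and EK: "E \<subseteq> Kedges n"
  shows "\<And>x y z. (x,y)\<in>E \<Longrightarrow> (y,z)\<in>E \<Longrightarrow> False"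
    and "\<And>x y u v. (x,y)\<in>E \<Longrightarrow> (u,v)\<in>E \<Longrightarrow> x<v \<Longrightarrow> u<y \<Longrightarrow> (x,v)\<in>E"
proof -
  fix x y z assume a: "(x,y)\<in>E" "(y,z)\<in>E"
  hence k0: "(x,y)\<in>Kedges n" "(y,z)\<in>Kedges n" using EK by auto
  hence k: "(x,y)\<in>Kedges n" "(y,z)\<in>Kedges n" "(x,z)\<in>Kedges n" by (auto simp: Kedges_def)
  have "a x - a y = 1" "a y - a z = 1" "a x - a z \<le> 1" using a k le eq by auto
  thus False by simp
next
  fix x y u v assume a: "(x,y)\<in>E" "(u,v)\<in>E" "x<v" "u<y"
  hence k0: "(x,y)\<in>Kedges n" "(u,v)\<in>Kedges n" using EK by auto
  hence k: "(x,y)\<in>Kedges n" "(u,v)\<in>Kedges n" "(x,v)\<in>Kedges n" "(u,y)\<in>Kedges n" using a by (auto simp: Kedges_def)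
  have "a x - a y = 1" "a u - a v = 1" "a x - a v \<le> 1" "a u - a y \<le> 1" using a k le eq by auto
  hence "a x - a v = 1" by simp
  thus "(x,v)\<in>E" using k eq by auto
qed

lemma inner_unitv: "c \<bullet> unitv idx i = c $ idx i"
  by (simp add: unitv_def inner_axis)

lemma inner_gen: "c \<bullet> (unitv idx i - unitv idx j) = c $ idx i - c $ idx j"
  by (simp add: inner_diff_right inner_unitv)

lemma gens_image: "{unitv idx i - unitv idx j | i j. (i, j) \<in> E} = (\<lambda>(i,j). unitv idx i - unitv idx j) ` E"
  by auto

lemma unitv_nth_inj:
  assumes "inj_on idx A" "i \<in> A" "k \<in> A"
  shows "unitv idx i $ idx k = (if k = i then 1 else 0)"
  using assms by (auto simp: unitv_def axis_def inj_on_eq_iff)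

lemma finite_Kedges: "finite (Kedges n)"
  by (rule finite_subset[of _ "{1..n} \<times> {1..n}"]) (auto simp: Kedges_def)

lemma hull_halfspace:
  fixes c :: "real^'n"
  assumes "\<And>x. x \<in> S \<Longrightarrow> c \<bullet> x \<le> b"
  shows "\<And>x. x \<in> convex hull S \<Longrightarrow> c \<bullet> x \<le> b"
proof -
  have "convex hull S \<subseteq> {x. c \<bullet> x \<le> b}"
    by (rule hull_minimal) (use assms convex_halfspace_le in auto)
  thus "\<And>x. x \<in> convex hull S \<Longrightarrow> c \<bullet> x \<le> b" by auto
qed

lemma geo_B:
  fixes idx :: "nat \<Rightarrow> 'n::finite" and a :: "nat \<Rightarrow> real"
  assumes bij: "bij_betw idx {1..CARD('n)} UNIV" and EK: "E \<subseteq> Kedges CARD('n)"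
    and le: "\<forall>(i,j)\<in>Kedges CARD('n). a i - a j \<le> 1"
    and eq: "\<forall>(i,j)\<in>Kedges CARD('n). (i,j)\<in>E \<longleftrightarrow> a i - a j = 1"
  shows "QH idx E face_of Qtilde idx CARD('n)"
proof -
  let ?n = "CARD('n)"
  have inj: "inj_on idx {1..?n}" using bij bij_betw_def by blast
  define c :: "real^'n" where "c = (\<chi> k. a (inv_into {1..?n} idx k))"
  have cidx: "c $ idx i = a i" if "i \<in> {1..?n}" for i
    using that inj by (simp add: c_def inv_into_f_f)
  have cg: "c \<bullet> (unitv idx i - unitv idx j) = a i - a j" if "(i,j) \<in> Kedges ?n" for i j
    using that by (simp add: inner_gen cidx Kedges_def)
  define S where "S = insert 0 {unitv idx i - unitv idx j | i j. (i, j) \<in> Kedges ?n}"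
  have fS: "finite S" unfolding S_def gens_image using finite_Kedges by simp
  have Sle: "c \<bullet> x \<le> 1" if "x \<in> S" for x
    using that le cg unfolding S_def by auto
  have Q: "Qtilde idx ?n = convex hull S" by (simp add: Qtilde_def S_def)
  have Qle: "\<And>x. x \<in> Qtilde idx ?n \<Longrightarrow> c \<bullet> x \<le> 1"
    unfolding Q by (rule hull_halfspace) (use Sle in auto)
  define F where "F = Qtilde idx ?n \<inter> {x. c \<bullet> x = 1}"
  have Ff: "F face_of Qtilde idx ?n" unfolding F_def
    by (rule face_of_Int_supporting_hyperplane_le) (use Qle in \<open>auto simp: Q\<close>)
  have "F = QH idx E"
  proof
    have gE: "{unitv idx i - unitv idx j | i j. (i, j) \<in> E} \<subseteq> F"
    proof
      fix x assume "x \<in> {unitv idx i - unitv idx j | i j. (i, j) \<in> E}"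
      then obtain i j where x: "x = unitv idx i - unitv idx j" "(i,j)\<in>E" by auto
      have k: "(i,j)\<in>Kedges ?n" using x EK by auto
      have "x \<in> S" using k x unfolding S_def by auto
      hence "x \<in> Qtilde idx ?n" unfolding Q by (rule hull_inc)
      moreover have "c \<bullet> x = 1" using cg[OF k] eq k x by auto
      ultimately show "x \<in> F" by (simp add: F_def)
    qed
    have "convex F" using Ff face_of_imp_convex by blast
    thus "QH idx E \<subseteq> F" unfolding QH_def using gE by (simp add: hull_minimal)
  next
    have cS: "compact S" using fS by (rule finite_imp_compact)
    have FS: "F face_of convex hull S" using Ff Q by simp
    obtain S' where S': "S' \<subseteq> S" "F = convex hull S'"
      by (rule face_of_convex_hull_subset[OF cS FS])
    have "S' \<subseteq> F" unfolding S'(2) by (rule hull_subset)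
    have "S' \<subseteq> {unitv idx i - unitv idx j | i j. (i, j) \<in> E}"
    proof
      fix x assume xS: "x \<in> S'"
      hence c1: "c \<bullet> x = 1" using \<open>S' \<subseteq> F\<close> by (auto simp: F_def)
      have "x \<in> S" using xS S' by auto
      moreover have "x \<noteq> 0" using c1 by auto
      ultimately obtain i j where x: "x = unitv idx i - unitv idx j" "(i,j) \<in> Kedges ?n"
        unfolding S_def by auto
      have "(i,j)\<in>E" using eq x cg[OF x(2)] c1 by auto
      thus "x \<in> {unitv idx i - unitv idx j | i j. (i, j) \<in> E}" using x by auto
    qed
    thus "F \<subseteq> QH idx E" unfolding QH_def S'(2) by (rule hull_mono)
  qed
  thus ?thesis using Ff by simp
qed

lemma geo_A:
  fixes idx :: "nat \<Rightarrow> 'n::finite"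
  assumes bij: "bij_betw idx {1..CARD('n)} UNIV" and EK: "E \<subseteq> Kedges CARD('n)"
    and face: "QH idx E face_of Qtilde idx CARD('n)" and ne: "E \<noteq> {}"
  shows "\<exists>a::nat\<Rightarrow>real. (\<forall>(i,j)\<in>Kedges CARD('n). a i - a j \<le> 1) \<and>
           (\<forall>(i,j)\<in>Kedges CARD('n). (i,j)\<in>E \<longleftrightarrow> a i - a j = 1)"
proof -
  let ?n = "CARD('n)"
  have inj: "inj_on idx {1..?n}" using bij bij_betw_def by blast
  define S where "S = insert 0 {unitv idx i - unitv idx j | i j. (i, j) \<in> Kedges ?n}"
  have fS: "finite S" unfolding S_def gens_image using finite_Kedges by simp
  have Q: "Qtilde idx ?n = convex hull S" by (simp add: Qtilde_def S_def)
  have "polyhedron (Qtilde idx ?n)" unfolding Q using fS by (rule polyhedron_convex_hull)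
  hence "QH idx E exposed_face_of Qtilde idx ?n" using face by (simp add: exposed_face_of_polyhedron)
  from this[unfolded exposed_face_of_def] obtain c b where cb: "Qtilde idx ?n \<subseteq> {x. c \<bullet> x \<le> b}" "QH idx E = Qtilde idx ?n \<inter> {x. c \<bullet> x = b}"
    by (elim conjE exE)
  have inQ: "unitv idx i - unitv idx j \<in> Qtilde idx ?n" if "(i,j) \<in> Kedges ?n" for i j
    unfolding Q by (rule hull_inc) (use that in \<open>auto simp: S_def\<close>)
  have zQ: "0 \<in> Qtilde idx ?n" unfolding Q by (rule hull_inc) (auto simp: S_def)
  define w :: "real^'n" where "w = (\<chi> k. real (inv_into {1..?n} idx k))"
  have widx: "w $ idx i = real i" if "i \<in> {1..?n}" for i
    using that inj by (simp add: w_def inv_into_f_f)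
  have wle0: "w \<bullet> y \<le> -1" if ym: "y \<in> {unitv idx i - unitv idx j | i j. (i, j) \<in> E}" for y
  proof -
    obtain i j where y: "y = unitv idx i - unitv idx j" "(i,j) \<in> E" using ym by blast
    hence "(i,j) \<in> Kedges ?n" using EK by auto
    thus "w \<bullet> y \<le> -1" using y by (auto simp: inner_gen widx Kedges_def)
  qed
  have wle: "w \<bullet> x \<le> -1" if "x \<in> QH idx E" for x
    using hull_halfspace[of _ w "-1", OF wle0] that unfolding QH_def by blast
  have z: "0 \<notin> QH idx E" using wle[of 0] by auto
  have "0 \<le> b" using cb(1) zQ by auto
  moreover have "b \<noteq> 0" using z cb zQ by auto
  ultimately have bpos: "b > 0" by simp
  define a where "a i = c $ idx i / b" for i
  have ag: "a i - a j = (c \<bullet> (unitv idx i - unitv idx j)) / b" for i j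
    by (simp add: a_def inner_gen diff_divide_distrib)
  have le: "\<forall>(i,j)\<in>Kedges ?n. a i - a j \<le> 1"
  proof (clarify)
    fix i j assume "(i,j) \<in> Kedges ?n"
    hence "c \<bullet> (unitv idx i - unitv idx j) \<le> b" using inQ cb(1) by blast
    thus "a i - a j \<le> 1" using bpos by (simp add: ag)
  qed
  have extreme: "(i,j) \<in> E" if k: "(i,j) \<in> Kedges ?n" and m: "unitv idx i - unitv idx j \<in> QH idx E" for i j
  proof (rule ccontr)
    assume nE: "(i,j) \<notin> E"
    define g where "g = unitv idx i - unitv idx j"
    have gv: "g \<bullet> (unitv idx k - unitv idx l) = (if k = i then 1 else 0) - (if k = j then 1 else 0)
              - (if l = i then 1 else 0) + (if l = j then 1 else 0)"
      if "k \<in> {1..?n}" "l \<in> {1..?n}" for k l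
    proof -
      have iin: "i \<in> {1..?n}" "j \<in> {1..?n}" using k by (auto simp: Kedges_def)
      show ?thesis unfolding g_def inner_gen vector_minus_component
        using unitv_nth_inj[OF inj] that iin by simp
    qed
    have g0: "g \<bullet> y \<le> 1" if ym: "y \<in> {unitv idx i - unitv idx j | i j. (i, j) \<in> E}" for y
    proof -
      obtain k l where y: "y = unitv idx k - unitv idx l" "(k,l) \<in> E" using ym by blast
      hence kl: "(k,l) \<in> Kedges ?n" using EK by auto
      have "(k,l) \<noteq> (i,j)" using nE y by auto
      thus "g \<bullet> y \<le> 1" using y kl k gv[of k l] by (auto simp: Kedges_def)
    qed
    have "g \<bullet> x \<le> 1" if "x \<in> QH idx E" for x
      using hull_halfspace[of _ g 1, OF g0] that unfolding QH_def by blast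
    moreover have "g \<bullet> g = 2" using gv[of i j] k by (simp add: g_def Kedges_def)
    ultimately show False using m g_def by fastforce
  qed
  have eq: "\<forall>(i,j)\<in>Kedges ?n. (i,j)\<in>E \<longleftrightarrow> a i - a j = 1"
  proof (clarify)
    fix i j assume k: "(i,j) \<in> Kedges ?n"
    show "(i,j)\<in>E \<longleftrightarrow> a i - a j = 1"
    proof
      assume "(i,j) \<in> E"
      hence "unitv idx i - unitv idx j \<in> QH idx E" unfolding QH_def by (intro hull_inc) auto
      hence "c \<bullet> (unitv idx i - unitv idx j) = b" using cb(2) by auto
      thus "a i - a j = 1" using bpos by (simp add: ag)
    next
      assume "a i - a j = 1"
      hence "c \<bullet> (unitv idx i - unitv idx j) = b" using bpos by (simp add: ag)
      hence "unitv idx i - unitv idx j \<in> QH idx E" using cb(2) inQ[OF k] by auto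
      thus "(i,j)\<in>E" using extreme k by blast
    qed
  qed
  show ?thesis using le eq by blast
qed


theorem mainTheorem18:
  fixes idx :: "nat \<Rightarrow> 'n::finite" and E :: "(nat \<times> nat) set"
  assumes "bij_betw idx {1..CARD('n)} UNIV"
    and "E \<subseteq> Kedges CARD('n)"
  shows "QH idx E face_of Qtilde idx CARD('n) \<longleftrightarrow>
    (\<exists>(l::nat) (ns::nat \<Rightarrow> nat) (L::nat \<Rightarrow> nat set) (R::nat \<Rightarrow> nat set).
       ns 0 = 0 \<and> ns (Suc l) = CARD('n) \<and> (\<forall>k\<le>l. ns k < ns (Suc k)) \<and>
       (\<forall>k\<le>l. L k \<subseteq> {ns k + 1..ns (Suc k)} \<and> R k \<subseteq> {ns k + 1..ns (Suc k)} \<and> L k \<inter> R k = {}) \<and>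
       E = {(i, j). i < j \<and> (\<exists>k\<le>l. i \<in> L k \<and> j \<in> R k)})"
proof
  have n1: "CARD('n) \<ge> 1" by (simp add: Suc_leI)
  assume face: "QH idx E face_of Qtilde idx CARD('n)"
  show "\<exists>(l::nat) (ns::nat \<Rightarrow> nat) (L::nat \<Rightarrow> nat set) (R::nat \<Rightarrow> nat set).
       ns 0 = 0 \<and> ns (Suc l) = CARD('n) \<and> (\<forall>k\<le>l. ns k < ns (Suc k)) \<and>
       (\<forall>k\<le>l. L k \<subseteq> {ns k + 1..ns (Suc k)} \<and> R k \<subseteq> {ns k + 1..ns (Suc k)} \<and> L k \<inter> R k = {}) \<and>
       E = {(i, j). i < j \<and> (\<exists>k\<le>l. i \<in> L k \<and> j \<in> R k)}"
  proof (cases "E = {}")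
    case True
    show ?thesis by (rule comb_A[OF n1 assms(2)]) (use True in auto)
  next
    case False
    obtain a :: "nat \<Rightarrow> real" where a: "\<forall>(i,j)\<in>Kedges CARD('n). a i - a j \<le> 1"
      "\<forall>(i,j)\<in>Kedges CARD('n). (i,j)\<in>E \<longleftrightarrow> a i - a j = 1"
      using geo_A[OF assms face False] by blast
    show ?thesis by (rule comb_A[OF n1 assms(2) from_a[OF a assms(2)]])
  qed
next
  assume "\<exists>(l::nat) (ns::nat \<Rightarrow> nat) (L::nat \<Rightarrow> nat set) (R::nat \<Rightarrow> nat set).
       ns 0 = 0 \<and> ns (Suc l) = CARD('n) \<and> (\<forall>k\<le>l. ns k < ns (Suc k)) \<and>
       (\<forall>k\<le>l. L k \<subseteq> {ns k + 1..ns (Suc k)} \<and> R k \<subseteq> {ns k + 1..ns (Suc k)} \<and> L k \<inter> R k = {}) \<and>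
       E = {(i, j). i < j \<and> (\<exists>k\<le>l. i \<in> L k \<and> j \<in> R k)}"
  then obtain l ns L R where h: "ns 0 = 0" "ns (Suc l) = CARD('n)" "\<forall>k\<le>l. ns k < ns (Suc k)"
       "\<forall>k\<le>l. L k \<subseteq> {ns k + 1..ns (Suc k)} \<and> R k \<subseteq> {ns k + 1..ns (Suc k)} \<and> L k \<inter> R k = {}"
       "E = {(i, j). i < j \<and> (\<exists>k\<le>l. i \<in> L k \<and> j \<in> R k)}" by blast
  obtain a :: "nat \<Rightarrow> real" where a: "\<forall>(i,j)\<in>Kedges CARD('n). a i - a j \<le> 1"
      "\<forall>(i,j)\<in>Kedges CARD('n). (i,j)\<in>E \<longleftrightarrow> a i - a j = 1"
    using comb_B[OF h] by blast
  show "QH idx E face_of Qtilde idx CARD('n)" by (rule geo_B[OF assms a])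
qed

end
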